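(* Let $V\neq\emptyset$, let $\kappa$ be a cardinal with $|V|\ge\kappa\ge\aleph_0$, and let $F\colon V\leadsto V$ be a strict multifunction. Then $\mathrm{Wall}_{\kappa}(F,V)$ is a proper filter on $V$.
   Context: A multifunction $F\colon V\leadsto V$ is a map $V\to P(V)$; it is strict if $F(v)\neq\emptyset$ for all $v$. For $B\subset V$, $F_{+}(B)=\{x\in V\mid F(x)\subset B\}$. $\mathrm{Wall}_{\kappa}(F,V)=\{U\subset V\mid |V\setminus F_{+}(U)|<\kappa\}$. A filter on $V$ is a nonempty family $\Phi\subset P(V)$ such that for all $A,B\subset V$: $A\in\Phi$ and $B\in\Phi$ iff $A\cap B\in\Phi$; it is proper if $\emptyset\notin\Phi$. *)

theory Defs
  imports Main
begin

text \<open>A multifunction F on V is modelled as a function F :: 'a => 'a set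
  together with the assumption that F v is a subset of V for v in V.\<close>

definition upper_inv :: "'a set \<Rightarrow> ('a \<Rightarrow> 'a set) \<Rightarrow> 'a set \<Rightarrow> 'a set" where
  "upper_inv V F B = {x \<in> V. F x \<subseteq> B}"

text \<open>Cardinals are represented as cardinal-order relations (Card_order).\<close>
definition Wall :: "'b rel \<Rightarrow> ('a \<Rightarrow> 'a set) \<Rightarrow> 'a set \<Rightarrow> 'a set set" where
  "Wall \<kappa> F V = {U. U \<subseteq> V \<and> (card_of (V - upper_inv V F U), \<kappa>) \<in> ordLess}"

definition is_filter_on :: "'a set \<Rightarrow> 'a set set \<Rightarrow> bool" where
  "is_filter_on V \<Phi> \<longleftrightarrow> \<Phi> \<noteq> {} \<and> \<Phi> \<subseteq> Pow V \<and>
     (\<forall>A B. A \<subseteq> V \<longrightarrow> B \<subseteq> V \<longrightarrow> ((A \<in> \<Phi> \<and> B \<in> \<Phi>) \<longleftrightarrow> A \<inter> B \<in> \<Phi>))"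

definition proper_filter_on :: "'a set \<Rightarrow> 'a set set \<Rightarrow> bool" where
  "proper_filter_on V \<Phi> \<longleftrightarrow> is_filter_on V \<Phi> \<and> {} \<notin> \<Phi>"

end

theory Submission
  imports Defs
begin

theorem lemma6p6:
  fixes V :: "'a set" and F :: "'a \<Rightarrow> 'a set" and \<kappa> :: "'b rel"
  assumes "V \<noteq> {}"
    and "Card_order \<kappa>"
    and "(natLeq, \<kappa>) \<in> ordLeq"
    and "(\<kappa>, card_of V) \<in> ordLeq"
    and "\<forall>v\<in>V. F v \<subseteq> V"
    and "\<forall>v\<in>V. F v \<noteq> {}"
  shows "proper_filter_on V (Wall \<kappa> F V)"
proof -
  have WO: "Well_order \<kappa>" using assms(2) by (simp add: card_order_on_well_order_on)
  have k1: "(\<kappa>, card_of (Field \<kappa>)) \<in> ordLeq"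
    using card_of_Field_ordIso[OF assms(2)] ordIso_symmetric ordIso_imp_ordLeq by blast
  have inf: "\<not> finite (Field \<kappa>)"
    using infinite_iff_natLeq_ordLeq ordLeq_transitive[OF assms(3) k1] by blast
  have e: "(card_of ({}::'a set), \<kappa>) \<in> ordLess"
  proof -
    have "\<not> (\<kappa>, card_of ({}::'a set)) \<in> ordLeq"
      using infinite_iff_natLeq_ordLeq ordLeq_transitive[OF assms(3)] by blast
    thus ?thesis using not_ordLeq_iff_ordLess[OF card_of_Well_order WO] by blast
  qed
  have uV: "upper_inv V F V = V" using assms(5) by (auto simp: upper_inv_def)
  have u0: "upper_inv V F {} = {}" using assms(6) by (auto simp: upper_inv_def)
  have uI: "V - upper_inv V F (A \<inter> B) = (V - upper_inv V F A) \<union> (V - upper_inv V F B)" for A B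
    by (auto simp: upper_inv_def)
  have mono: "A \<subseteq> B \<Longrightarrow> V - upper_inv V F B \<subseteq> V - upper_inv V F A" for A B
    by (auto simp: upper_inv_def)
  have "V \<in> Wall \<kappa> F V" using e uV by (simp add: Wall_def)
  moreover have "{} \<notin> Wall \<kappa> F V"
    using u0 assms(4) not_ordLess_ordLeq unfolding Wall_def by auto
  moreover have "Wall \<kappa> F V \<subseteq> Pow V" by (auto simp: Wall_def)
  moreover have "(A \<in> Wall \<kappa> F V \<and> B \<in> Wall \<kappa> F V) \<longleftrightarrow> A \<inter> B \<in> Wall \<kappa> F V"
    if "A \<subseteq> V" "B \<subseteq> V" for A B
  proof
    assume "A \<in> Wall \<kappa> F V \<and> B \<in> Wall \<kappa> F V"
    thus "A \<inter> B \<in> Wall \<kappa> F V"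
      using card_of_Un_ordLess_infinite_Field[OF inf assms(2)] uI[of A B]
      unfolding Wall_def by auto
  next
    assume h: "A \<inter> B \<in> Wall \<kappa> F V"
    have "(card_of (V - upper_inv V F A), \<kappa>) \<in> ordLess"
      using h card_of_mono1[OF mono[of "A \<inter> B" A]] ordLeq_ordLess_trans unfolding Wall_def by blast
    moreover have "(card_of (V - upper_inv V F B), \<kappa>) \<in> ordLess"
      using h card_of_mono1[OF mono[of "A \<inter> B" B]] ordLeq_ordLess_trans unfolding Wall_def by blast
    ultimately show "A \<in> Wall \<kappa> F V \<and> B \<in> Wall \<kappa> F V" using that by (simp add: Wall_def)
  qed
  ultimately show ?thesis unfolding proper_filter_on_def is_filter_on_def by blast
qed

end
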